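(* Let $\mathcal{M}$ be a set of models, $c$ a cost function, $\mathcal{S}$ a step neighborhood function and $m_0$ a base model, as in the context. Assume there exist constants $c_{\min},c_{\max}$ with $0<c_{\min}\le c(m)\le c_{\max}$ for all $m\in\mathcal{M}$. Let $\gamma\ge1$ and $\lambda>0$, and for $K\ge0$ let $$z_\lambda(K)=\inf_{\bm{m}\in\mathcal{P}_K}\Big(c(m_K)+\lambda\sum_{k=1}^K\gamma^k c(m_k)\Big).$$ Then every $K_{\mathrm{opt}}\in\arg\min_{K\ge0} z_\lambda(K)$ satisfies $K_{\mathrm{opt}}\le K_{\max}$, where $$K_{\max}=\begin{cases}\dfrac{c_{\max}}{\lambda c_{\min}} & \text{if }\gamma=1,\\[2mm] \dfrac{\log\!\left(1+\frac{(\gamma-1)c_{\max}}{\lambda\gamma c_{\min}}\right)}{\log\gamma} & \text{if }\gamma>1.\end{cases}$$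
   Context: Setting: $\mathcal{M}$ is a set (of models), $c:\mathcal{M}\to(0,\infty)$ is a cost function, and $\mathcal{S}:\mathcal{M}\to 2^{\mathcal{M}}$ is a step neighborhood function with $\mathcal{S}(m)\neq\emptyset$ for all $m$. A fixed base model $m_0\in\mathcal{M}$ is given. An interpretable path of length $K\ge 0$ is a sequence $\bm{m}=(m_1,\dots,m_K)$ with $m_k\in\mathcal{S}(m_{k-1})$ for $1\le k\le K$; its final model is $m_K$ (which is $m_0$ when $K=0$, in which case the sum in $z_\lambda(0)$ is empty and $z_\lambda(0)=c(m_0)$). $\mathcal{P}_K$ denotes the set of interpretable paths of length $K$. *)

theory Defs
  imports "HOL-Analysis.Analysis"
begin

text \<open>An interpretable path of length K from base model m0, represented as a
  function p :: nat => 'm where p 0 = m0 and p k is in S (p (k-1)) for 1 <= k <= K.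
  Only the values p 0, ..., p K matter.\<close>
definition interp_path :: "('m \<Rightarrow> 'm set) \<Rightarrow> 'm \<Rightarrow> nat \<Rightarrow> (nat \<Rightarrow> 'm) \<Rightarrow> bool" where
  "interp_path S m0 K p \<longleftrightarrow> p 0 = m0 \<and> (\<forall>k\<in>{1..K}. p k \<in> S (p (k - 1)))"

definition path_cost :: "('m \<Rightarrow> real) \<Rightarrow> real \<Rightarrow> real \<Rightarrow> nat \<Rightarrow> (nat \<Rightarrow> 'm) \<Rightarrow> real" where
  "path_cost c gam lam K p = c (p K) + lam * (\<Sum>k=1..K. gam ^ k * c (p k))"

definition z_lambda :: "('m \<Rightarrow> real) \<Rightarrow> ('m \<Rightarrow> 'm set) \<Rightarrow> 'm \<Rightarrow> real \<Rightarrow> real \<Rightarrow> nat \<Rightarrow> real" where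
  "z_lambda c S m0 gam lam K = (INF p \<in> {p. interp_path S m0 K p}. path_cost c gam lam K p)"

definition K_max :: "real \<Rightarrow> real \<Rightarrow> real \<Rightarrow> real \<Rightarrow> real" where
  "K_max cmin cmax gam lam =
     (if gam = 1 then cmax / (lam * cmin)
      else ln (1 + (gam - 1) * cmax / (lam * gam * cmin)) / ln gam)"

end

theory Submission
  imports Defs
begin

lemma path_in_M:
  assumes "interp_path S m0 K p" "m0 \<in> M" "\<And>m. m \<in> M \<Longrightarrow> S m \<subseteq> M"
  shows "k \<le> K \<Longrightarrow> p k \<in> M"
proof (induction k)
  case 0 then show ?case using assms unfolding interp_path_def by auto
next
  case (Suc k)
  then have "p (Suc k) \<in> S (p k)" using assms(1) unfolding interp_path_def by force
  then show ?case using Suc assms(3) by auto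
qed

lemma geo: "((gam::real) - 1) * (\<Sum>k=1..K. gam ^ k) = gam ^ (K+1) - gam"
  by (induction K) (auto simp: algebra_simps)

lemma sum_one: "(\<Sum>k=1..K. (1::real) ^ k) = real K"
  by simp

theorem proposition2:
  fixes M :: "'m set" and c :: "'m \<Rightarrow> real" and S :: "'m \<Rightarrow> 'm set" and m0 :: 'm
    and cmin cmax gam lam :: real and Kopt :: nat
  assumes m0: "m0 \<in> M"
    and S_sub: "\<And>m. m \<in> M \<Longrightarrow> S m \<subseteq> M"
    and S_ne: "\<And>m. m \<in> M \<Longrightarrow> S m \<noteq> {}"
    and c_pos: "\<And>m. m \<in> M \<Longrightarrow> c m > 0"
    and cmin_pos: "0 < cmin"
    and c_bounds: "\<And>m. m \<in> M \<Longrightarrow> cmin \<le> c m \<and> c m \<le> cmax"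
    and gamma: "gam \<ge> 1"
    and lambda: "lam > 0"
    and opt: "\<forall>K. z_lambda c S m0 gam lam Kopt \<le> z_lambda c S m0 gam lam K"
  shows "real Kopt \<le> K_max cmin cmax gam lam"
proof -
  define G where "G = (\<Sum>k=1..Kopt. gam ^ k)"
  have z0: "z_lambda c S m0 gam lam 0 = c m0"
  proof -
    have "{p. interp_path S m0 0 p} \<noteq> {}"
      by (auto simp: interp_path_def)
    moreover have "\<And>p. interp_path S m0 0 p \<Longrightarrow> path_cost c gam lam 0 p = c m0"
      by (simp add: interp_path_def path_cost_def)
    ultimately have "path_cost c gam lam 0 ` {p. interp_path S m0 0 p} = {c m0}"
      by auto
    then show ?thesis unfolding z_lambda_def by simp
  qed
  have ne: "{p. interp_path S m0 Kopt p} \<noteq> {}"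
  proof -
    define p where "p = rec_nat m0 (\<lambda>_ m. SOME x. x \<in> S m)"
    have "p k \<in> M" for k
    proof (induction k)
      case 0 then show ?case using m0 by (simp add: p_def)
    next
      case (Suc k)
      have "p (Suc k) = (SOME x. x \<in> S (p k))" by (simp add: p_def)
      also have "\<dots> \<in> S (p k)" using S_ne[OF Suc] by (simp add: some_in_eq)
      finally show ?case using S_sub[OF Suc] by auto
    qed
    have step: "p (Suc k) \<in> S (p k)" for k
    proof -
      have "p (Suc k) = (SOME x. x \<in> S (p k))" by (simp add: p_def)
      also have "\<dots> \<in> S (p k)" using S_ne[OF \<open>p k \<in> M\<close>] by (simp add: some_in_eq)
      finally show ?thesis .
    qed
    have "interp_path S m0 Kopt p"
      unfolding interp_path_def
    proof (intro conjI ballI)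
      show "p 0 = m0" by (simp add: p_def)
    next
      fix k assume "k \<in> {1..Kopt}"
      then obtain j where "k = Suc j" by (cases k) auto
      then show "p k \<in> S (p (k - 1))" using step by simp
    qed
    then show ?thesis by auto
  qed
  have lb: "cmin + lam * (cmin * G) \<le> z_lambda c S m0 gam lam Kopt"
    unfolding z_lambda_def
  proof (rule cINF_greatest[OF ne])
    fix p assume "p \<in> {p. interp_path S m0 Kopt p}"
    then have ip: "interp_path S m0 Kopt p" by simp
    have inM: "k \<le> Kopt \<Longrightarrow> p k \<in> M" for k using path_in_M[OF ip m0 S_sub] .
    have "cmin * G = (\<Sum>k=1..Kopt. gam ^ k * cmin)"
      by (simp add: G_def sum_distrib_left mult.commute)
    also have "\<dots> \<le> (\<Sum>k=1..Kopt. gam ^ k * c (p k))"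
      apply (rule sum_mono)
      using inM c_bounds gamma by (auto intro!: mult_left_mono)
    finally have "lam * (cmin * G) \<le> lam * (\<Sum>k=1..Kopt. gam ^ k * c (p k))"
      using lambda by (auto intro!: mult_left_mono)
    moreover have "cmin \<le> c (p Kopt)" using inM c_bounds by auto
    ultimately show "cmin + lam * (cmin * G) \<le> path_cost c gam lam Kopt p"
      by (simp add: path_cost_def)
  qed
  have "cmin + lam * (cmin * G) \<le> cmax"
    using lb opt[rule_format, of 0] z0 c_bounds[OF m0] by linarith
  then have key: "lam * cmin * G \<le> cmax" using cmin_pos by (simp add: algebra_simps)
  show ?thesis
  proof (cases "gam = 1")
    case True
    then have "G = real Kopt" by (simp add: G_def)
    then show ?thesis using True key lambda cmin_pos
      by (simp add: K_max_def pos_le_divide_eq mult.commute)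
  next
    case False
    then have g1: "gam > 1" using gamma by simp
    have "(gam - 1) * G = gam ^ (Kopt+1) - gam" unfolding G_def by (rule geo)
    then have "gam * (gam ^ Kopt - 1) = (gam - 1) * G" by (simp add: algebra_simps)
    also have "\<dots> \<le> (gam - 1) * (cmax / (lam * cmin))"
      using key g1 lambda cmin_pos by (auto intro!: mult_left_mono simp: pos_le_divide_eq ac_simps)
    finally have "gam ^ Kopt - 1 \<le> (gam - 1) * cmax / (lam * gam * cmin)"
      using g1 lambda cmin_pos by (simp add: field_simps)
    then have le: "gam ^ Kopt \<le> 1 + (gam - 1) * cmax / (lam * gam * cmin)" by simp
    have "real Kopt * ln gam = ln (gam ^ Kopt)" using g1 by (simp add: ln_realpow)
    also have "\<dots> \<le> ln (1 + (gam - 1) * cmax / (lam * gam * cmin))"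
    proof -
      have "0 < gam ^ Kopt" using g1 by simp
      then show ?thesis using le by (subst ln_le_cancel_iff) auto
    qed
    finally show ?thesis using g1 False
      by (simp add: K_max_def pos_le_divide_eq)
  qed
qed

end
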